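(* Let $N$ be a positive integer and $\alpha>1$ with $\alpha N\in\mathbb{N}$. Then $\mathrm{TFF}(\alpha,N)=\mathrm{TFF}(\tilde\alpha,\tilde N)$, where $1/\alpha+1/\tilde\alpha=1$ and $\tilde N=N(\alpha-1)$.
   Context: For a positive integer $N$, $\mathrm{TFF}(\alpha,N)$ is the set of weakly decreasing sequences of positive integers $(L_1,\ldots,L_K)$ such that there exist orthogonal projections $P_1,\ldots,P_K$ on $\mathbb{R}^N$ with $\operatorname{rank}P_i=L_i$ and $\sum_{i=1}^K P_i=\alpha\mathbf I$. *)

theory Defs
  imports "Jordan_Normal_Form.DL_Rank"
begin

definition orth_proj :: "nat \<Rightarrow> real mat \<Rightarrow> bool" where
  "orth_proj N P \<longleftrightarrow> P \<in> carrier_mat N N \<and> P * P = P \<and> transpose_mat P = P"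

definition TFF :: "real \<Rightarrow> nat \<Rightarrow> nat list set" where
  "TFF \<alpha> N = {L. sorted_wrt (\<ge>) L \<and> (\<forall>l\<in>set L. 0 < l) \<and>
     (\<exists>Ps :: real mat list. length Ps = length L \<and>
        (\<forall>i<length L. orth_proj N (Ps ! i) \<and> vec_space.rank N (Ps ! i) = L ! i) \<and>
        foldr (+) Ps (0\<^sub>m N N) = \<alpha> \<cdot>\<^sub>m 1\<^sub>m N)}"

end

theory Submission
  imports Defs "Jordan_Normal_Form.Gram_Schmidt"
begin


definition mtr :: "real mat \<Rightarrow> real" where
  "mtr A = (\<Sum>i<dim_row A. A $$ (i,i))"

lemma mtr_comm:
  assumes A: "A \<in> carrier_mat n m" and B: "B \<in> carrier_mat m n"
  shows "mtr (A * B) = mtr (B * A)"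
proof -
  have "mtr (A * B) = (\<Sum>i<n. \<Sum>k<m. A $$ (i,k) * B $$ (k,i))"
    using A B by (simp add: mtr_def scalar_prod_def atLeast0LessThan)
  also have "\<dots> = (\<Sum>k<m. \<Sum>i<n. B $$ (k,i) * A $$ (i,k))"
    by (subst sum.swap) (simp add: mult.commute)
  also have "\<dots> = mtr (B * A)"
    using A B by (simp add: mtr_def scalar_prod_def atLeast0LessThan)
  finally show ?thesis .
qed

lemma mtr_add: "A \<in> carrier_mat n n \<Longrightarrow> B \<in> carrier_mat n n \<Longrightarrow> mtr (A + B) = mtr A + mtr B"
  by (simp add: mtr_def sum.distrib)

lemma mtr_minus: "A \<in> carrier_mat n n \<Longrightarrow> B \<in> carrier_mat n n \<Longrightarrow> mtr (A - B) = mtr A - mtr B"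
  by (simp add: mtr_def sum_subtractf)

lemma mtr_smult: "A \<in> carrier_mat n n \<Longrightarrow> mtr (c \<cdot>\<^sub>m A) = c * mtr A"
  by (simp add: mtr_def sum_distrib_left)

lemma mtr_one: "mtr (1\<^sub>m n) = real n"
  by (simp add: mtr_def)

lemma mtr_zero: "mtr (0\<^sub>m n n) = 0"
  by (simp add: mtr_def)

definition lsum :: "nat \<Rightarrow> nat \<Rightarrow> real mat list \<Rightarrow> real mat" where
  "lsum n m xs = foldr (+) xs (0\<^sub>m n m)"

lemma lsum_Nil[simp]: "lsum n m [] = 0\<^sub>m n m" by (simp add: lsum_def)
lemma lsum_Cons[simp]: "lsum n m (x # xs) = x + lsum n m xs" by (simp add: lsum_def)

lemma lsum_carrier: "set xs \<subseteq> carrier_mat n m \<Longrightarrow> lsum n m xs \<in> carrier_mat n m"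
  by (induct xs) auto

lemma mult_lsum: assumes "A \<in> carrier_mat k n" "set xs \<subseteq> carrier_mat n m"
  shows "A * lsum n m xs = lsum k m (map ((*) A) xs)"
  using assms(2)
proof (induct xs)
  case Nil then show ?case using assms(1) by simp
next
  case (Cons x xs)
  then have "A * (x + lsum n m xs) = A * x + A * lsum n m xs"
    using assms(1) by (intro mult_add_distrib_mat[where nr=k and n=n and nc=m]) (auto intro: lsum_carrier)
  then show ?case using Cons by simp
qed

lemma lsum_mult: assumes "B \<in> carrier_mat m k" "set xs \<subseteq> carrier_mat n m"
  shows "lsum n m xs * B = lsum n k (map (\<lambda>X. X * B) xs)"
  using assms(2)
proof (induct xs)
  case Nil then show ?case using assms(1) by simp
next
  case (Cons x xs)
  then have "(x + lsum n m xs) * B = x * B + lsum n m xs * B"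
    using assms(1) by (intro add_mult_distrib_mat[where nr=n and n=m and nc=k]) (auto intro: lsum_carrier)
  then show ?case using Cons by simp
qed

lemma transpose_lsum: assumes "set xs \<subseteq> carrier_mat n m"
  shows "transpose_mat (lsum n m xs) = lsum m n (map transpose_mat xs)"
  using assms
proof (induct xs)
  case (Cons x xs)
  then show ?case by (simp add: transpose_add[of _ n m] lsum_carrier)
qed simp

lemma mtr_lsum: assumes "set xs \<subseteq> carrier_mat n n"
  shows "mtr (lsum n n xs) = sum_list (map mtr xs)"
  using assms
proof (induct xs)
  case (Cons x xs)
  then show ?case by (simp add: mtr_add[of _ n] lsum_carrier)
qed (simp add: mtr_zero)

lemma smult_lsum: assumes "set xs \<subseteq> carrier_mat n m"
  shows "c \<cdot>\<^sub>m lsum n m xs = lsum n m (map (\<lambda>X. c \<cdot>\<^sub>m X) xs)"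
  using assms
proof (induct xs)
  case (Cons x xs)
  then show ?case by (simp add: add_smult_distrib_left_mat[of _ n m] lsum_carrier)
qed simp

lemma lsum_collapse: assumes "distinct is" "j \<in> set is" "A \<in> carrier_mat n m"
  shows "lsum n m (map (\<lambda>i. if i = j then A else 0\<^sub>m n m) is) = A"
proof -
  have "lsum n m (map (\<lambda>i. if i = j then A else 0\<^sub>m n m) is) = (if j \<in> set is then A else 0\<^sub>m n m)"
    if "distinct is" for "is" using that
  proof (induct "is")
    case (Cons i "is")
    have c: "lsum n m (map (\<lambda>i. if i = j then A else 0\<^sub>m n m) is) \<in> carrier_mat n m"
      by (rule lsum_carrier) (auto simp: assms(3))
    show ?case using Cons assms(3) c by auto
  qed simp
  then show ?thesis using assms by simp
qed

lemma lsum_cong: "(\<And>x. x \<in> set xs \<Longrightarrow> f x = g x) \<Longrightarrow> lsum n m (map f xs) = lsum n m (map g xs)"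
  by (metis map_cong)



lemma real_cscalar: "(v :: real vec) \<bullet>c w = v \<bullet> w"
proof -
  have "conjugate w = w" by (intro eq_vecI) (auto simp: conjugate_vec_def)
  then show ?thesis by simp
qed

lemma (in vec_space) fixes_span:
  assumes B: "B \<in> carrier_mat n n" and A: "A \<subseteq> carrier_vec n"
    and fx: "\<And>x. x \<in> A \<Longrightarrow> B *\<^sub>v x = x"
    and v: "v \<in> span A"
  shows "B *\<^sub>v v = v"
proof -
  from in_spanE[OF v] obtain a C where C: "v = lincomb a C" "finite C" "C \<subseteq> A" by blast
  have Cc: "C \<subseteq> carrier_vec n" using C A by auto
  have vc: "v \<in> carrier_vec n" using C Cc lincomb_closed by auto
  show ?thesis
  proof (rule eq_vecI)
    show "dim_vec (B *\<^sub>v v) = dim_vec v" using B vc by simp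
    fix i assume "i < dim_vec v"
    then have i: "i < n" using vc by simp
    have "(B *\<^sub>v v) $ i = (\<Sum>k<n. B $$ (i,k) * v $ k)"
      using B i vc by (simp add: scalar_prod_def atLeast0LessThan)
    also have "\<dots> = (\<Sum>k<n. B $$ (i,k) * (\<Sum>x\<in>C. a x * x $ k))"
      using lincomb_index[OF _ Cc] C(1) by simp
    also have "\<dots> = (\<Sum>x\<in>C. a x * (\<Sum>k<n. B $$ (i,k) * x $ k))"
      by (simp add: sum_distrib_left sum_distrib_right mult.assoc mult.left_commute) (rule sum.swap)
    also have "\<dots> = (\<Sum>x\<in>C. a x * x $ i)"
    proof (rule sum.cong)
      fix x assume x: "x \<in> C"
      have xc: "x \<in> carrier_vec n" and bx: "B *\<^sub>v x = x" using x Cc C fx by auto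
      have "(\<Sum>k<n. B $$ (i,k) * x $ k) = (B *\<^sub>v x) $ i"
        using B i xc by (simp add: scalar_prod_def atLeast0LessThan)
      then have "(\<Sum>k<n. B $$ (i,k) * x $ k) = x $ i" using bx by simp
      then show "a x * (\<Sum>k<n. B $$ (i,k) * x $ k) = a x * x $ i" by simp
    qed simp
    also have "\<dots> = v $ i" using lincomb_index[OF i Cc] C(1) by simp
    finally show "(B *\<^sub>v v) $ i = v $ i" .
  qed
qed

lemma mat_eq_by_cols:
  assumes "A \<in> carrier_mat n m" "B \<in> carrier_mat n m" "\<And>k. k < m \<Longrightarrow> col A k = col B k"
  shows "A = B"
  using assms by (intro mat_col_eqI) auto

lemma proj_factor:
  fixes P :: "real mat"
  assumes "orth_proj n P"
  shows "\<exists>U. U \<in> carrier_mat n (vec_space.rank n P) \<and> transpose_mat U * U = 1\<^sub>m (vec_space.rank n P)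
     \<and> U * transpose_mat U = P"
proof -
  interpret V: cof_vec_space n "TYPE(real)" .
  have P: "P \<in> carrier_mat n n" and PP: "P * P = P" and PT: "transpose_mat P = P"
    using assms by (auto simp: orth_proj_def)
  have colsc: "set (cols P) \<subseteq> carrier_vec n" using P cols_dim by blast
  obtain S where max: "maximal S (\<lambda>T. T \<subseteq> set (cols P) \<and> V.lin_indpt T)"
    using maximal_exists[of "(\<lambda>T. T \<subseteq> set (cols P) \<and> V.lin_indpt T)" "card (set (cols P))" "{}"]
    by (meson List.finite_set card_mono empty_iff empty_subsetI V.finite_lin_indpt2 rev_finite_subset)
  have rk: "V.rank P = card S" using V.rank_card_indpt[OF P max] .
  have SP: "S \<subseteq> set (cols P)" and li: "V.lin_indpt S" using max by (auto simp: maximal_def)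
  have fS: "finite S" using SP finite_subset by blast
  have Sc: "S \<subseteq> carrier_vec n" using SP colsc by auto
  have colsS: "set (cols P) \<subseteq> V.span S"
  proof
    fix s assume s: "s \<in> set (cols P)"
    show "s \<in> V.span S"
    proof (rule ccontr)
      assume ns: "s \<notin> V.span S"
      have "s \<notin> S" using ns Sc V.in_own_span by auto
      then have "V.lin_indpt (S \<union> {s})"
        using V.lin_dep_iff_in_span[OF Sc li] ns s colsc by auto
      moreover have "S \<union> {s} \<subseteq> set (cols P)" using SP s by auto
      ultimately have "S = S \<union> {s}" using max unfolding maximal_def by blast
      then show False using \<open>s \<notin> S\<close> by auto
    qed
  qed
  obtain ws where ws: "set ws = S" "distinct ws" using finite_distinct_list[OF fS] by blast
  define us where "us = gram_schmidt n ws"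
  have wsc: "set ws \<subseteq> carrier_vec n" using ws Sc by auto
  note gs = V.gram_schmidt_result[OF wsc ws(2) li[folded ws(1)] us_def]
  have usc: "set us \<subseteq> carrier_vec n" and lus: "length us = card S"
    using gs ws distinct_card[OF ws(2)] by auto
  have spanus: "V.span (set us) = V.span S" using gs(1) ws by simp
  define r where "r = card S"
  have pos: "us ! i \<bullet> us ! i > 0" if i: "i < r" for i
  proof -
    have "us ! i \<bullet>c us ! i \<noteq> 0" using corthogonalD[OF gs(2), of i i] i lus r_def by auto
    moreover have "us ! i \<bullet>c us ! i \<ge> 0" using usc i lus r_def
      by (intro conjugate_square_ge_0_vec)
    ultimately show ?thesis by (simp add: real_cscalar)
  qed
  have orth: "us ! i \<bullet> us ! j = 0" if "i < r" "j < r" "i \<noteq> j" for i j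
    using corthogonalD[OF gs(2), of i j] that lus r_def by (simp add: real_cscalar)
  define vs where "vs = map (\<lambda>u. (1 / sqrt (u \<bullet> u)) \<cdot>\<^sub>v u) us"
  have lvs: "length vs = r" using lus r_def vs_def by simp
  have vsc: "set vs \<subseteq> carrier_vec n" using usc by (auto simp: vs_def)
  have vsi: "vs ! i = (1 / sqrt (us ! i \<bullet> us ! i)) \<cdot>\<^sub>v us ! i" if "i < r" for i
    using that lus r_def by (simp add: vs_def)
  have usic: "us ! i \<in> carrier_vec n" if "i < r" for i using usc that lus r_def by auto
  have on: "vs ! i \<bullet> vs ! j = (if i = j then 1 else 0)" if ij: "i < r" "j < r" for i j
  proof -
    have "vs ! i \<bullet> vs ! j = (1 / sqrt (us ! i \<bullet> us ! i)) * (1 / sqrt (us ! j \<bullet> us ! j)) * (us ! i \<bullet> us ! j)"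
      using vsi[OF ij(1)] vsi[OF ij(2)] usic[OF ij(1)] usic[OF ij(2)]
      by (simp add: smult_scalar_prod_distrib[of _ n] scalar_prod_smult_distrib[of _ n])
    then show ?thesis
      using orth[OF ij] pos[OF ij(1)]
      by (auto simp: field_simps)
  qed
  define U where "U = mat_of_cols n vs"
  have U: "U \<in> carrier_mat n r" using lvs U_def by auto
  have colU: "col U k = vs ! k" if "k < r" for k using that lvs vsc U_def by (auto intro!: col_mat_of_cols)
  have UTU: "transpose_mat U * U = 1\<^sub>m r"
  proof (rule eq_matI)
    fix i j assume "i < dim_row (1\<^sub>m r)" "j < dim_col (1\<^sub>m r)"
    then have ij: "i < r" "j < r" by auto
    have "(transpose_mat U * U) $$ (i,j) = col U i \<bullet> col U j" using U ij by simp
    then show "(transpose_mat U * U) $$ (i,j) = 1\<^sub>m r $$ (i,j)" using on[OF ij] colU ij by simp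
  qed (use U in auto)
  have Pfixcols: "P *\<^sub>v x = x" if xin: "x \<in> set (cols P)" for x
  proof -
    obtain j where j0: "j < length (cols P)" "x = cols P ! j" using xin by (auto simp: in_set_conv_nth)
    then have j: "j < n" "x = col P j" using P by auto
    have "P *\<^sub>v col P j = col (P * P) j" by (rule col_mult2[OF P P j(1), symmetric])
    then show ?thesis using PP j by simp
  qed
  have spanSP: "V.span S \<subseteq> V.span (set (cols P))" using SP colsc
    by (simp add: V.span_is_monotone)
  have "col (P * U) k = col U k" if k: "k < r" for k
  proof -
    have "us ! k \<in> set us" using k lus r_def by simp
    then have "us ! k \<in> V.span (set us)" using V.in_own_span[OF usc] by blast
    then have "vs ! k \<in> V.span (set us)"
      using vsi[OF k] V.smult_in_span[OF usc] by auto
    then have "vs ! k \<in> V.span (set (cols P))" using spanus spanSP by auto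
    then have pv: "P *\<^sub>v vs ! k = vs ! k" using V.fixes_span[OF P colsc Pfixcols] by blast
    show ?thesis by (simp only: col_mult2[OF P U k] colU[OF k] pv)
  qed
  then have PU: "P * U = U" using P U by (intro mat_eq_by_cols[of _ n r]) auto
  have UUc: "U * transpose_mat U \<in> carrier_mat n n" using U by auto
  have UUfix: "(U * transpose_mat U) *\<^sub>v x = x" if x: "x \<in> set us" for x
  proof -
    obtain k where k: "k < r" "x = us ! k" using x lus r_def by (auto simp: in_set_conv_nth)
    have "(U * transpose_mat U) *\<^sub>v vs ! k = U *\<^sub>v (transpose_mat U *\<^sub>v col U k)"
      using U colU k vsc lvs by (subst assoc_mult_mat_vec[of U n r "transpose_mat U" n]) auto
    also have "\<dots> = U *\<^sub>v col (transpose_mat U * U) k"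
      using col_mult2[of "transpose_mat U" r n U r k] U k by simp
    also have "\<dots> = U *\<^sub>v col (1\<^sub>m r) k" using UTU by simp
    also have "\<dots> = col (U * 1\<^sub>m r) k" using col_mult2[of U n r "1\<^sub>m r" r k] U k by simp
    also have "\<dots> = vs ! k" using U k colU by simp
    finally have e: "(U * transpose_mat U) *\<^sub>v vs ! k = vs ! k" .
    define s where "s = sqrt (us ! k \<bullet> us ! k)"
    have s0: "s > 0" using pos[OF k(1)] s_def by simp
    have "us ! k = s \<cdot>\<^sub>v vs ! k" using vsi[OF k(1)] s0 usic[OF k(1)] unfolding s_def[symmetric]
      by (auto simp: smult_smult_assoc)
    then show ?thesis using e k mult_mat_vec[OF UUc, of "vs ! k" s] vsc lvs
      by (metis nth_mem subsetD)
  qed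
  have "col (U * transpose_mat U * P) k = col P k" if k: "k < n" for k
  proof -
    have "cols P ! k \<in> set (cols P)" using k P by (intro nth_mem) simp
    then have "col P k \<in> set (cols P)" using k P by simp
    then have "col P k \<in> V.span (set us)" using colsS spanus by auto
    then have pv: "(U * transpose_mat U) *\<^sub>v col P k = col P k" using V.fixes_span[OF UUc usc UUfix] by blast
    show ?thesis by (simp only: col_mult2[OF UUc P k] pv)
  qed
  then have UUP: "U * transpose_mat U * P = P" using P UUc by (intro mat_eq_by_cols[of _ n n]) auto
  have "P = transpose_mat (U * transpose_mat U * P)" using UUP PT by simp
  also have "\<dots> = transpose_mat P * transpose_mat (U * transpose_mat U)"
    using UUc P by (simp add: transpose_mult)
  also have "\<dots> = P * (U * transpose_mat U)" using PT U by (simp add: transpose_mult)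
  also have "\<dots> = U * transpose_mat U" using PU P U by (metis assoc_mult_mat carrier_matD(1) carrier_mat_triv transpose_carrier_mat)
  finally have "U * transpose_mat U = P" ..
  then show ?thesis using U UTU rk r_def by auto
qed

lemma proj_mtr_rank:
  assumes "orth_proj n P"
  shows "mtr P = real (vec_space.rank n P)"
proof -
  obtain U where U: "U \<in> carrier_mat n (vec_space.rank n P)"
    "transpose_mat U * U = 1\<^sub>m (vec_space.rank n P)" "U * transpose_mat U = P"
    using proj_factor[OF assms] by blast
  have "mtr P = mtr (transpose_mat U * U)" using U mtr_comm[OF U(1), of "transpose_mat U"] by simp
  then show ?thesis using U(2) mtr_one by simp
qed



lemma lsum_index: assumes "set xs \<subseteq> carrier_mat n m" "a < n" "b < m"
  shows "lsum n m xs $$ (a,b) = sum_list (map (\<lambda>X. X $$ (a,b)) xs)"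
  using assms(1)
proof (induct xs)
  case (Cons x xs)
  then have "lsum n m xs \<in> carrier_mat n m" by (intro lsum_carrier) auto
  then show ?case using Cons assms by simp
qed (use assms in simp)

lemma sum_ind_prod: fixes x y M :: nat shows "(\<Sum>a<M. (if a = x then 1 else 0) * (if a = y then 1 else (0::real)))
   = (if x = y \<and> x < M then 1 else 0)"
proof -
  have "(\<Sum>a<M. (if a = x then 1 else 0) * (if a = y then 1 else (0::real)))
     = (\<Sum>a<M. if a = x then (if x = y then 1 else 0) else 0)"
    by (rule sum.cong) auto
  also have "\<dots> = (if x = y \<and> x < M then 1 else 0)" by (simp add: sum.delta sum.delta')
  finally show ?thesis .
qed

lemma sum_ind_prod2: fixes a b o' l :: nat shows "(\<Sum>k<l. (if a = o' + k then 1 else 0) * (if b = o' + k then 1 else (0::real)))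
   = (if a = b \<and> o' \<le> a \<and> a < o' + l then 1 else 0)"
proof -
  have "(\<Sum>k<l. (if a = o' + k then 1 else 0) * (if b = o' + k then 1 else (0::real)))
     = (\<Sum>k<l. if k = a - o' then (if a = b \<and> o' \<le> a then 1 else 0) else 0)"
    by (rule sum.cong) auto
  also have "\<dots> = (if a = b \<and> o' \<le> a \<and> a < o' + l then 1 else 0)" by (auto simp: sum.delta sum.delta')
  finally show ?thesis .
qed

lemma count_blocks:
  fixes off :: "nat \<Rightarrow> nat"
  assumes "off 0 = 0" "\<And>i. off i \<le> off (Suc i)"
  shows "(\<Sum>i<K. if off i \<le> a \<and> a < off (Suc i) then 1 else (0::real)) = (if a < off K then 1 else 0)"
proof (induct K)
  case (Suc K)
  show ?case using Suc assms(2)[of K] by auto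
qed (use assms in simp)



lemma smult_smult_m: "a \<cdot>\<^sub>m (b \<cdot>\<^sub>m A) = (a * b) \<cdot>\<^sub>m (A :: real mat)"
  by (intro eq_matI) auto

lemma transpose_smult_m: "transpose_mat (a \<cdot>\<^sub>m A) = a \<cdot>\<^sub>m transpose_mat (A :: real mat)"
  by (intro eq_matI) auto

lemma assoc4:
  assumes A: "A \<in> carrier_mat a b" and B: "B \<in> carrier_mat b c" and C: "C \<in> carrier_mat c d"
    and D: "D \<in> carrier_mat d e"
  shows "A * B * (C * D) = A * (B * C) * (D :: real mat)"
proof -
  have "A * B * (C * D) = A * (B * (C * D))" using A B C D by (intro assoc_mult_mat) auto
  also have "B * (C * D) = (B * C) * D" using B C D by (intro assoc_mult_mat[symmetric]) auto
  also have "A * ((B * C) * D) = (A * (B * C)) * D" using A B C D by (intro assoc_mult_mat[symmetric]) auto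
  finally show ?thesis .
qed

lemma one_minus_smult: "1\<^sub>m n - c \<cdot>\<^sub>m 1\<^sub>m n = (1 - c) \<cdot>\<^sub>m (1\<^sub>m n :: real mat)"
  by (intro eq_matI) auto

lemma tff_sub:
  fixes N N' :: nat and \<alpha> \<alpha>' :: real
  assumes a1: "\<alpha> > 1" and inv: "1 / \<alpha> + 1 / \<alpha>' = 1"
    and NN: "real N' = real N * (\<alpha> - 1)" and L: "L \<in> TFF \<alpha> N"
  shows "L \<in> TFF \<alpha>' N'"
proof -
  from L obtain Ps where srt: "sorted_wrt (\<ge>) L" and lpos: "\<forall>l\<in>set L. 0 < l"
    and len: "length Ps = length L"
    and proj: "\<forall>i<length L. orth_proj N (Ps ! i) \<and> vec_space.rank N (Ps ! i) = L ! i"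
    and sumP: "foldr (+) Ps (0\<^sub>m N N) = \<alpha> \<cdot>\<^sub>m 1\<^sub>m N"
    unfolding TFF_def by blast
  define K where "K = length L"
  have "\<forall>i<K. \<exists>X. X \<in> carrier_mat N (L ! i) \<and> transpose_mat X * X = 1\<^sub>m (L ! i) \<and> X * transpose_mat X = Ps ! i"
    using proj_factor proj unfolding K_def by metis
  then obtain U where U: "\<And>i. i < K \<Longrightarrow> U i \<in> carrier_mat N (L ! i)"
    "\<And>i. i < K \<Longrightarrow> transpose_mat (U i) * U i = 1\<^sub>m (L ! i)"
    "\<And>i. i < K \<Longrightarrow> U i * transpose_mat (U i) = Ps ! i"
    by metis
  have Pc: "\<And>i. i < K \<Longrightarrow> Ps ! i \<in> carrier_mat N N" using proj unfolding K_def orth_proj_def by auto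
  define off where "off i = (\<Sum>j<i. L ! j)" for i
  define M where "M = off K"
  have off0: "off 0 = 0" by (simp add: off_def)
  have offS: "off (Suc i) = off i + L ! i" for i by (simp add: off_def)
  have offmono: "off i \<le> off j" if "i \<le> j" for i j
    unfolding off_def using that by (intro sum_mono2) auto
  have offM: "off i + L ! i \<le> M" if "i < K" for i
    using offmono[of "Suc i" K] that offS M_def by auto
  define R where "R i = mat (L ! i) M (\<lambda>(k,a). if a = off i + k then 1 else (0::real))" for i
  have Rc: "R i \<in> carrier_mat (L ! i) M" for i by (simp add: R_def)
  have RtRc: "transpose_mat (R i) * R i \<in> carrier_mat M M" for i using Rc[of i] by auto
  have RRT: "R i * transpose_mat (R j) = (if i = j then 1\<^sub>m (L ! i) else 0\<^sub>m (L ! i) (L ! j))"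
    if ij: "i < K" "j < K" for i j
  proof (rule eq_matI)
    fix k l assume "k < dim_row (if i = j then 1\<^sub>m (L ! i) else 0\<^sub>m (L ! i) (L ! j))"
      "l < dim_col (if i = j then 1\<^sub>m (L ! i) else 0\<^sub>m (L ! i) (L ! j))"
    then have kl: "k < L ! i" "l < L ! j" by (auto split: if_splits)
    have "(R i * transpose_mat (R j)) $$ (k,l) =
       (\<Sum>a<M. (if a = off i + k then 1 else 0) * (if a = off j + l then 1 else (0::real)))"
      using kl by (simp add: R_def scalar_prod_def atLeast0LessThan)
    also have "\<dots> = (if off i + k = off j + l \<and> off i + k < M then 1 else 0)" by (rule sum_ind_prod)
    also have "\<dots> = (if i = j then 1\<^sub>m (L ! i) else 0\<^sub>m (L ! i) (L ! j)) $$ (k,l)"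
    proof (cases "i = j")
      case True then show ?thesis using kl offM[OF ij(1)] by auto
    next
      case False
      have "off i + k \<noteq> off j + l"
      proof (cases "i < j")
        case True
        then have "off i + k < off j" using offmono[of "Suc i" j] offS[of i] kl by auto
        then show ?thesis by auto
      next
        case F: False
        then have "j < i" using False by auto
        then have "off j + l < off i" using offmono[of "Suc j" i] offS[of j] kl by auto
        then show ?thesis by auto
      qed
      then show ?thesis using False kl by auto
    qed
    finally show "(R i * transpose_mat (R j)) $$ (k,l) = (if i = j then 1\<^sub>m (L ! i) else 0\<^sub>m (L ! i) (L ! j)) $$ (k,l)" .
  qed (auto simp: R_def)
  have RTR: "lsum M M (map (\<lambda>i. transpose_mat (R i) * R i) [0..<K]) = 1\<^sub>m M"
  proof (rule eq_matI)
    fix a b assume "a < dim_row (1\<^sub>m M)" "b < dim_col (1\<^sub>m M)"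
    then have ab: "a < M" "b < M" by auto
    have "lsum M M (map (\<lambda>i. transpose_mat (R i) * R i) [0..<K]) $$ (a,b)
       = sum_list (map (\<lambda>i. (transpose_mat (R i) * R i) $$ (a,b)) [0..<K])"
      using ab RtRc by (subst lsum_index[of _ M M]) (auto simp: o_def)
    also have "\<dots> = (\<Sum>i<K. (transpose_mat (R i) * R i) $$ (a,b))"
      by (simp add: sum_list_map_eq_sum_count2 atLeast0LessThan[symmetric] sum_set_upt_conv_sum_list_nat[symmetric])
    also have "\<dots> = (\<Sum>i<K. if a = b then (if off i \<le> a \<and> a < off (Suc i) then 1 else 0) else 0)"
    proof (rule sum.cong)
      fix i assume "i \<in> {..<K}"
      have "(transpose_mat (R i) * R i) $$ (a,b) =
         (\<Sum>k<L ! i. (if a = off i + k then 1 else 0) * (if b = off i + k then 1 else (0::real)))"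
        using ab by (simp add: R_def scalar_prod_def atLeast0LessThan)
      also have "\<dots> = (if a = b \<and> off i \<le> a \<and> a < off i + L ! i then 1 else 0)" by (rule sum_ind_prod2)
      finally show "(transpose_mat (R i) * R i) $$ (a,b) =
         (if a = b then (if off i \<le> a \<and> a < off (Suc i) then 1 else 0) else 0)" using offS by auto
    qed simp
    also have "\<dots> = (if a = b then (if a < off K then 1 else 0) else 0)"
      using count_blocks[where off=off and K=K and a=a, OF off0] offS by auto
    also have "\<dots> = 1\<^sub>m M $$ (a,b)" using ab M_def by auto
    finally show "lsum M M (map (\<lambda>i. transpose_mat (R i) * R i) [0..<K]) $$ (a,b) = 1\<^sub>m M $$ (a,b)" .
  qed (use RtRc lsum_carrier[of "map (\<lambda>i. transpose_mat (R i) * R i) [0..<K]" M M] in auto)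

  have URc: "U i * R i \<in> carrier_mat N M" if "i < K" for i using U(1)[OF that] Rc[of i] by auto
  have RUc: "transpose_mat (R i) * transpose_mat (U i) \<in> carrier_mat M N" if "i < K" for i
    using U(1)[OF that] Rc[of i] by simp
  define V where "V = lsum N M (map (\<lambda>i. U i * R i) [0..<K])"
  have Vc: "V \<in> carrier_mat N M" unfolding V_def by (rule lsum_carrier) (auto intro: URc)
  have VR: "V * transpose_mat (R j) = U j" if j: "j < K" for j
  proof -
    have RTc: "transpose_mat (R j) \<in> carrier_mat M (L ! j)" using Rc[of j] by auto
    have "V * transpose_mat (R j) = lsum N (L ! j) (map (\<lambda>i. U i * R i * transpose_mat (R j)) [0..<K])"
      unfolding V_def using URc by (subst lsum_mult[OF RTc]) (auto simp: o_def)
    also have "\<dots> = lsum N (L ! j) (map (\<lambda>i. if i = j then U j else 0\<^sub>m N (L ! j)) [0..<K])"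
    proof (rule lsum_cong)
      fix i assume "i \<in> set [0..<K]"
      then have i: "i < K" by simp
      have "U i * R i * transpose_mat (R j) = U i * (R i * transpose_mat (R j))"
        using U(1)[OF i] Rc[of i] RTc by simp
      also have "\<dots> = (if i = j then U j else 0\<^sub>m N (L ! j))"
        using RRT[OF i j] U(1)[OF i] U(1)[OF j] by (auto simp: right_mult_zero_mat)
      finally show "U i * R i * transpose_mat (R j) = (if i = j then U j else 0\<^sub>m N (L ! j))" .
    qed
    also have "\<dots> = U j" using j U(1)[OF j] by (intro lsum_collapse) auto
    finally show ?thesis .
  qed
  have VT: "transpose_mat V = lsum M N (map (\<lambda>i. transpose_mat (R i) * transpose_mat (U i)) [0..<K])"
  proof -
    have "transpose_mat V = lsum M N (map (\<lambda>i. transpose_mat (U i * R i)) [0..<K])"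
      unfolding V_def using URc by (subst transpose_lsum[of _ N M]) (auto simp: o_def)
    also have "\<dots> = lsum M N (map (\<lambda>i. transpose_mat (R i) * transpose_mat (U i)) [0..<K])"
      by (rule lsum_cong) (use transpose_mult[OF U(1) Rc] in auto)
    finally show ?thesis .
  qed
  have sumP': "lsum N N (map (\<lambda>i. Ps ! i) [0..<K]) = \<alpha> \<cdot>\<^sub>m 1\<^sub>m N"
  proof -
    have "map (\<lambda>i. Ps ! i) [0..<K] = Ps" using len K_def map_nth[of Ps] by simp
    then show ?thesis using sumP unfolding lsum_def by simp
  qed
  have VVT: "V * transpose_mat V = \<alpha> \<cdot>\<^sub>m 1\<^sub>m N"
  proof -
    have "V * transpose_mat V = lsum N N (map (\<lambda>i. V * (transpose_mat (R i) * transpose_mat (U i))) [0..<K])"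
      unfolding VT using RUc by (subst mult_lsum[OF Vc]) (auto simp: o_def)
    also have "\<dots> = lsum N N (map (\<lambda>i. Ps ! i) [0..<K])"
    proof (rule lsum_cong)
      fix i assume "i \<in> set [0..<K]"
      then have i: "i < K" by simp
      have "V * (transpose_mat (R i) * transpose_mat (U i)) = (V * transpose_mat (R i)) * transpose_mat (U i)"
        using Vc Rc[of i] U(1)[OF i] by (subst assoc_mult_mat[of _ N M _ "L ! i" _ N]) auto
      then show "V * (transpose_mat (R i) * transpose_mat (U i)) = Ps ! i" using VR[OF i] U(3)[OF i] by simp
    qed
    finally show ?thesis using sumP' by simp
  qed
  define G where "G = transpose_mat V * V"
  have Gc: "G \<in> carrier_mat M M" using Vc by (auto simp: G_def)
  have GT: "transpose_mat G = G" using Vc by (simp add: G_def transpose_mult[of _ M N _ M])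
  have GG: "G * G = \<alpha> \<cdot>\<^sub>m G"
  proof -
    have tV: "transpose_mat V \<in> carrier_mat M N" using Vc by simp
    have "G * G = transpose_mat V * (V * (transpose_mat V * V))"
      unfolding G_def by (rule assoc_mult_mat[OF tV Vc, of _ M]) (use tV Vc in simp)
    also have "V * (transpose_mat V * V) = (V * transpose_mat V) * V"
      by (rule assoc_mult_mat[OF Vc tV Vc, symmetric])
    also have "transpose_mat V * ((V * transpose_mat V) * V) = transpose_mat V * (\<alpha> \<cdot>\<^sub>m V)" using VVT Vc by (simp add: mult_smult_assoc_mat[of _ N N _ M])
    also have "\<dots> = \<alpha> \<cdot>\<^sub>m G" using Vc by (simp add: G_def mult_smult_distrib[of _ M N _ M])
    finally show ?thesis .
  qed
  define c where "c = 1 / \<alpha>"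
  have ca: "c * \<alpha> = 1" using a1 by (simp add: c_def)
  define H where "H = 1\<^sub>m M - c \<cdot>\<^sub>m G"
  have Hc: "H \<in> carrier_mat M M" using Gc by (auto simp: H_def)
  have cGc: "c \<cdot>\<^sub>m G \<in> carrier_mat M M" using Gc by auto
  have HG: "H * G = 0\<^sub>m M M"
  proof -
    have "H * G = 1\<^sub>m M * G - (c \<cdot>\<^sub>m G) * G" unfolding H_def using Gc cGc
      by (intro minus_mult_distrib_mat) auto
    also have "\<dots> = G - c \<cdot>\<^sub>m (G * G)" using Gc by (simp add: mult_smult_assoc_mat[of _ M M _ M])
    also have "\<dots> = G - (c * \<alpha>) \<cdot>\<^sub>m G" using GG by (simp add: smult_smult_m)
    also have "\<dots> = 0\<^sub>m M M" using ca Gc by (intro eq_matI) auto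
    finally show ?thesis .
  qed
  have HH: "H * H = H"
  proof -
    have "H * (1\<^sub>m M - c \<cdot>\<^sub>m G) = H * 1\<^sub>m M - H * (c \<cdot>\<^sub>m G)"
      by (rule mult_minus_distrib_mat[OF Hc one_carrier_mat cGc])
    then have "H * H = H * 1\<^sub>m M - H * (c \<cdot>\<^sub>m G)" by (simp only: H_def[symmetric])
    also have "\<dots> = H - c \<cdot>\<^sub>m (H * G)" using Hc Gc by (simp add: mult_smult_distrib[of _ M M _ M])
    also have "\<dots> = H" using HG Hc by (intro eq_matI) auto
    finally show ?thesis .
  qed
  have HT: "transpose_mat H = H"
    unfolding H_def using Gc GT by (simp add: transpose_minus[of _ M M] transpose_smult_m)
  have Hproj: "orth_proj M H" using Hc HH HT by (simp add: orth_proj_def)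

  define r where "r = vec_space.rank M H"
  obtain W' where W': "W' \<in> carrier_mat M r" "transpose_mat W' * W' = 1\<^sub>m r" "W' * transpose_mat W' = H"
    using proj_factor[OF Hproj] unfolding r_def by blast
  define W where "W = transpose_mat W'"
  have Wc: "W \<in> carrier_mat r M" using W' by (simp add: W_def)
  have WWT: "W * transpose_mat W = 1\<^sub>m r" using W' by (simp add: W_def)
  have WTW: "transpose_mat W * W = H" using W' by (simp add: W_def)
  define d where "d = 1 - c"
  have a'0: "\<alpha>' \<noteq> 0"
  proof
    assume "\<alpha>' = 0"
    then have "1 / \<alpha> = 1" using inv by simp
    then show False using a1 by simp
  qed
  have "1 / \<alpha>' = d" using inv by (simp add: d_def c_def)
  then have d\<alpha>: "\<alpha>' * d = 1" using a'0 by auto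
  define X where "X j = W * transpose_mat (R j)" for j
  have Xc: "X j \<in> carrier_mat r (L ! j)" for j using Wc Rc[of j] by (simp add: X_def)
  have RHR: "R j * H * transpose_mat (R j) = d \<cdot>\<^sub>m 1\<^sub>m (L ! j)" if j: "j < K" for j
  proof -
    have RTc: "transpose_mat (R j) \<in> carrier_mat M (L ! j)" using Rc[of j] by simp
    have tVc: "transpose_mat V \<in> carrier_mat M N" using Vc by simp
    have "R j * H = R j * 1\<^sub>m M - R j * (c \<cdot>\<^sub>m G)"
      unfolding H_def by (rule mult_minus_distrib_mat[OF Rc one_carrier_mat cGc])
    also have "\<dots> = R j - c \<cdot>\<^sub>m (R j * G)" using Rc[of j] Gc by (simp add: mult_smult_distrib[of _ "L ! j" M _ M])
    finally have "R j * H * transpose_mat (R j) = (R j - c \<cdot>\<^sub>m (R j * G)) * transpose_mat (R j)" by simp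
    also have "\<dots> = R j * transpose_mat (R j) - (c \<cdot>\<^sub>m (R j * G)) * transpose_mat (R j)"
      using Rc[of j] Gc RTc by (intro minus_mult_distrib_mat) auto
    also have "(c \<cdot>\<^sub>m (R j * G)) * transpose_mat (R j) = c \<cdot>\<^sub>m (R j * G * transpose_mat (R j))"
      using Rc[of j] Gc RTc by (intro mult_smult_assoc_mat) auto
    also have "R j * G * transpose_mat (R j) = transpose_mat (V * transpose_mat (R j)) * (V * transpose_mat (R j))"
    proof -
      have "transpose_mat (V * transpose_mat (R j)) = R j * transpose_mat V"
        using transpose_mult[OF Vc RTc] by simp
      moreover have "R j * (transpose_mat V * V) = (R j * transpose_mat V) * V"
        by (rule assoc_mult_mat[OF Rc tVc Vc, symmetric])
      moreover have "(R j * transpose_mat V) * V * transpose_mat (R j) = (R j * transpose_mat V) * (V * transpose_mat (R j))"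
        by (rule assoc_mult_mat[OF mult_carrier_mat[OF Rc tVc] Vc RTc])
      ultimately show ?thesis by (simp add: G_def)
    qed
    also have "\<dots> = 1\<^sub>m (L ! j)" using VR[OF j] U(2)[OF j] by simp
    also have "R j * transpose_mat (R j) = 1\<^sub>m (L ! j)" using RRT[OF j j] by simp
    finally show ?thesis by (simp add: one_minus_smult d_def)
  qed
  have XTX: "transpose_mat (X j) * X j = d \<cdot>\<^sub>m 1\<^sub>m (L ! j)" if j: "j < K" for j
  proof -
    have "transpose_mat (X j) = R j * transpose_mat W"
      using transpose_mult[OF Wc, of "transpose_mat (R j)" "L ! j"] Rc[of j] by (simp add: X_def)
    then have "transpose_mat (X j) * X j = R j * (transpose_mat W * W) * transpose_mat (R j)"
      using assoc4[OF Rc[of j], of "transpose_mat W" r W M "transpose_mat (R j)" "L ! j"] Wc Rc[of j]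
      by (simp add: X_def)
    then show ?thesis using WTW RHR[OF j] by simp
  qed
  define Q where "Q j = \<alpha>' \<cdot>\<^sub>m (X j * transpose_mat (X j))" for j
  have Qc: "Q j \<in> carrier_mat r r" for j using Xc[of j] by (simp add: Q_def)
  have QT: "transpose_mat (Q j) = Q j" for j
    using Xc[of j] by (simp add: Q_def transpose_smult_m transpose_mult[of _ r "L ! j" _ r])
  have QQ: "Q j * Q j = Q j" if j: "j < K" for j
  proof -
    have tXc: "transpose_mat (X j) \<in> carrier_mat (L ! j) r" using Xc[of j] by simp
    have "Q j * Q j = (\<alpha>' * \<alpha>') \<cdot>\<^sub>m (X j * transpose_mat (X j) * (X j * transpose_mat (X j)))"
      using Xc[of j] by (simp add: Q_def mult_smult_distrib[of _ r r _ r] mult_smult_assoc_mat[of _ r r _ r] smult_smult_m)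
    also have "X j * transpose_mat (X j) * (X j * transpose_mat (X j)) = X j * (transpose_mat (X j) * X j) * transpose_mat (X j)"
      by (rule assoc4[OF Xc tXc Xc tXc])
    also have "\<dots> = d \<cdot>\<^sub>m (X j * transpose_mat (X j))"
      using XTX[OF j] Xc[of j] tXc
      by (simp add: mult_smult_distrib[of _ r "L ! j" _ "L ! j"] mult_smult_assoc_mat[of _ r "L ! j" _ r])
    finally show ?thesis using d\<alpha> by (simp add: smult_smult_m Q_def)
      (metis mult.assoc mult.commute mult_1)
  qed
  have Qproj: "orth_proj r (Q j)" if "j < K" for j using Qc QT QQ that by (simp add: orth_proj_def)
  have mtrQ: "mtr (Q j) = real (L ! j)" if j: "j < K" for j
  proof -
    have "mtr (Q j) = \<alpha>' * mtr (X j * transpose_mat (X j))"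
      using Xc[of j] by (simp add: Q_def mtr_smult[of _ r])
    also have "mtr (X j * transpose_mat (X j)) = mtr (transpose_mat (X j) * X j)"
      using Xc[of j] by (intro mtr_comm[of _ r "L ! j"]) auto
    also have "\<dots> = d * real (L ! j)" using XTX[OF j] by (simp add: mtr_smult[of _ "L ! j"] mtr_one)
    finally show ?thesis using d\<alpha> by simp
  qed
  have rkQ: "vec_space.rank r (Q j) = L ! j" if j: "j < K" for j
    using proj_mtr_rank[OF Qproj[OF j]] mtrQ[OF j] by simp

  have XXT: "X j * transpose_mat (X j) = W * (transpose_mat (R j) * R j) * transpose_mat W" for j
  proof -
    have "transpose_mat (X j) = R j * transpose_mat W"
      using transpose_mult[OF Wc, of "transpose_mat (R j)" "L ! j"] Rc[of j] by (simp add: X_def)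
    then show ?thesis unfolding X_def
      using assoc4[OF Wc _ Rc[of j], of "transpose_mat (R j)" "transpose_mat W" r] Wc Rc[of j] by simp
  qed
  have sumQ: "foldr (+) (map Q [0..<K]) (0\<^sub>m r r) = \<alpha>' \<cdot>\<^sub>m 1\<^sub>m r"
  proof -
    have Zc: "set (map (\<lambda>j. transpose_mat (R j) * R j) [0..<K]) \<subseteq> carrier_mat M M" using RtRc by auto
    have WZc: "set (map (\<lambda>j. W * (transpose_mat (R j) * R j)) [0..<K]) \<subseteq> carrier_mat r M"
      using RtRc Wc by auto
    have Yc: "set (map (\<lambda>j. W * (transpose_mat (R j) * R j) * transpose_mat W) [0..<K]) \<subseteq> carrier_mat r r"
      using RtRc Wc by auto
    have mQ: "map Q [0..<K] = map (\<lambda>X. \<alpha>' \<cdot>\<^sub>m X) (map (\<lambda>j. W * (transpose_mat (R j) * R j) * transpose_mat W) [0..<K])"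
      by (simp add: Q_def XXT)
    have "foldr (+) (map Q [0..<K]) (0\<^sub>m r r) = lsum r r (map (\<lambda>X. \<alpha>' \<cdot>\<^sub>m X) (map (\<lambda>j. W * (transpose_mat (R j) * R j) * transpose_mat W) [0..<K]))"
      unfolding mQ by (simp only: lsum_def)
    also have "\<dots> = \<alpha>' \<cdot>\<^sub>m lsum r r (map (\<lambda>j. W * (transpose_mat (R j) * R j) * transpose_mat W) [0..<K])"
      by (rule smult_lsum[OF Yc, symmetric])
    also have "lsum r r (map (\<lambda>j. W * (transpose_mat (R j) * R j) * transpose_mat W) [0..<K])
       = lsum r M (map (\<lambda>j. W * (transpose_mat (R j) * R j)) [0..<K]) * transpose_mat W"
      using lsum_mult[of "transpose_mat W" M r "map (\<lambda>j. W * (transpose_mat (R j) * R j)) [0..<K]" r] WZc Wc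
      by (simp add: o_def)
    also have "lsum r M (map (\<lambda>j. W * (transpose_mat (R j) * R j)) [0..<K])
       = W * lsum M M (map (\<lambda>j. transpose_mat (R j) * R j) [0..<K])"
      using mult_lsum[OF Wc Zc] by (simp add: o_def)
    also have "\<dots> = W" using RTR Wc by simp
    finally show ?thesis using WWT by simp
  qed
  have mtrP: "mtr (Ps ! i) = real (L ! i)" if "i < K" for i
    using proj_mtr_rank[of N "Ps ! i"] proj that unfolding K_def by auto
  have realM: "real M = \<alpha> * real N"
  proof -
    have "\<alpha> * real N = mtr (\<alpha> \<cdot>\<^sub>m 1\<^sub>m N)" by (simp add: mtr_smult[of _ N] mtr_one)
    also have "\<dots> = mtr (lsum N N (map (\<lambda>i. Ps ! i) [0..<K]))" using sumP' by simp
    also have "\<dots> = sum_list (map (\<lambda>i. mtr (Ps ! i)) [0..<K])"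
      using Pc by (subst mtr_lsum[of _ N]) (auto simp: o_def)
    also have "\<dots> = sum_list (map (\<lambda>i. real (L ! i)) [0..<K])"
      by (rule arg_cong[where f=sum_list]) (use mtrP in auto)
    also have "\<dots> = (\<Sum>i<K. real (L ! i))"
      by (simp add: sum_set_upt_conv_sum_list_nat[symmetric] atLeast0LessThan)
    also have "\<dots> = real M" by (simp add: M_def off_def)
    finally show ?thesis ..
  qed
  have rN: "r = N'"
  proof -
    have "real r = mtr (1\<^sub>m r)" by (simp add: mtr_one)
    also have "\<dots> = mtr (transpose_mat W * W)" using WWT Wc mtr_comm[of W r M "transpose_mat W"] by simp
    also have "\<dots> = mtr (1\<^sub>m M) - c * mtr G" using WTW Gc
      by (simp add: H_def mtr_minus[of _ M] mtr_smult[of _ M])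
    also have "mtr G = mtr (V * transpose_mat V)" unfolding G_def
      using mtr_comm[of "transpose_mat V" M N V] Vc by simp
    also have "\<dots> = \<alpha> * real N" using VVT by (simp add: mtr_smult[of _ N] mtr_one)
    finally have fr: "real r = real M - c * (\<alpha> * real N)" by (simp add: mtr_one)
    have e: "c * (\<alpha> * real N) = real N" using ca by (simp add: mult.assoc[symmetric])
    have e2: "real N' = real N * \<alpha> - real N" using NN by (simp add: algebra_simps)
    have "real r = real N'" using fr e e2 realM by (simp add: mult.commute)
    then show ?thesis by simp
  qed
  show ?thesis unfolding TFF_def
  proof (intro CollectI conjI srt lpos exI[of _ "map Q [0..<K]"] allI impI)
    show "length (map Q [0..<K]) = length L" by (simp add: K_def)
    show "foldr (+) (map Q [0..<K]) (0\<^sub>m N' N') = \<alpha>' \<cdot>\<^sub>m 1\<^sub>m N'" using sumQ rN by simp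
  next
    fix i assume "i < length L"
    then have i: "i < K" by (simp add: K_def)
    show "orth_proj N' (map Q [0..<K] ! i)" using Qproj[OF i] rN i by simp
    show "vec_space.rank N' (map Q [0..<K] ! i) = L ! i" using rkQ[OF i] rN i by simp
  qed
qed


theorem corollary2p7:
  fixes N :: nat and \<alpha> \<alpha>' :: real and N' :: nat
  assumes "N > 0" and "\<alpha> > 1" and "\<alpha> * real N \<in> \<nat>"
    and "1 / \<alpha> + 1 / \<alpha>' = 1"
    and "real N' = real N * (\<alpha> - 1)"
  shows "TFF \<alpha> N = TFF \<alpha>' N'"
proof
  show "TFF \<alpha> N \<subseteq> TFF \<alpha>' N'" using tff_sub[OF assms(2) assms(4) assms(5)] by blast
next
  have ia: "1 / \<alpha>' = 1 - 1 / \<alpha>" using assms(4) by simp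
  have p: "0 < 1 / \<alpha>" "1 / \<alpha> < 1" using assms(2) by auto
  have a'pos: "\<alpha>' > 0"
  proof -
    have "1 / \<alpha>' > 0" using ia p by simp
    then show ?thesis by (simp add: zero_less_divide_1_iff)
  qed
  have a'1: "\<alpha>' > 1"
  proof -
    have "1 / \<alpha>' < 1" using ia p by simp
    then show ?thesis using a'pos by (simp add: divide_less_eq)
  qed
  have a': "\<alpha>' = \<alpha> / (\<alpha> - 1)"
  proof -
    have h: "1 / \<alpha>' = (\<alpha> - 1) / \<alpha>" using ia assms(2) by (simp add: field_simps)
    have "\<alpha>' = 1 / (1 / \<alpha>')" by simp
    also have "\<dots> = \<alpha> / (\<alpha> - 1)" using h by simp
    finally show ?thesis .
  qed
  have NN: "real N = real N' * (\<alpha>' - 1)"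
  proof -
    have "\<alpha>' - 1 = 1 / (\<alpha> - 1)" using a' assms(2) by (simp add: field_simps)
    then show ?thesis using assms(5) assms(2) by simp
  qed
  have inv': "1 / \<alpha>' + 1 / \<alpha> = 1" using assms(4) by simp
  show "TFF \<alpha>' N' \<subseteq> TFF \<alpha> N"
    using tff_sub[OF a'1 inv' NN] by blast
qed

end
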